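(* Let $q$ be a prime power, $m\ge2$, $1\le k<n$, and let $X\in \mathbb{F}_{q^m}^{k\times(n-k)}$ be chosen uniformly at random. Then $$\Pr\big(\mathrm{rs} [\,I_k \mid X\,] \text{ is a generalized Gabidulin code}\big) \leq \phi(m)\,( 2q^{1-m})^{\lfloor\frac{k}{2}\rfloor \lfloor\frac{n-k}{2}\rfloor},$$ where $\phi$ is Euler's totient function.
   Context: $\mathrm{rs}$ denotes $\mathbb{F}_{q^m}$-row space. For $s$ coprime to $m$ and $g_1,\dots,g_n\in\mathbb{F}_{q^m}$ linearly independent over $\mathbb{F}_q$, the generalized Gabidulin code of dimension $k$ with parameter $s$ is the row space of the $k\times n$ matrix with $(i,j)$ entry $g_j^{q^{s(i-1)}}$; a generalized Gabidulin code is such a code for some such $s$ and $g_1,\dots,g_n$. *)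

theory Defs
  imports Complex_Main "HOL-Number_Theory.Number_Theory"
begin

definition prime_power :: "nat \<Rightarrow> bool" where
  "prime_power q \<longleftrightarrow> (\<exists>p r. prime p \<and> r > 0 \<and> q = p ^ r)"

text \<open>Vectors of length n over F are functions nat => F that vanish outside {..<n};
  a k x n matrix is a function nat => nat => F (entries outside the range are ignored).\<close>
definition row_space :: "nat \<Rightarrow> nat \<Rightarrow> (nat \<Rightarrow> nat \<Rightarrow> 'a::field) \<Rightarrow> (nat \<Rightarrow> 'a) set" where
  "row_space k n M = {v. \<exists>a :: nat \<Rightarrow> 'a. v = (\<lambda>j. if j < n then (\<Sum>i<k. a i * M i j) else 0)}"

text \<open>The subfield F_q of F_{q^m} is {x. x^q = x}.  Linear independence over F_q.\<close>
definition lin_indep_Fq :: "nat \<Rightarrow> nat \<Rightarrow> (nat \<Rightarrow> 'a::field) \<Rightarrow> bool" where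
  "lin_indep_Fq q n g \<longleftrightarrow>
     (\<forall>c :: nat \<Rightarrow> 'a. (\<forall>j<n. c j ^ q = c j) \<longrightarrow> (\<Sum>j<n. c j * g j) = 0 \<longrightarrow> (\<forall>j<n. c j = 0))"

definition gab_matrix :: "nat \<Rightarrow> nat \<Rightarrow> (nat \<Rightarrow> 'a::field) \<Rightarrow> nat \<Rightarrow> nat \<Rightarrow> 'a" where
  "gab_matrix q s g i j = g j ^ (q ^ (s * i))"

definition generalized_gabidulin :: "nat \<Rightarrow> nat \<Rightarrow> nat \<Rightarrow> nat \<Rightarrow> (nat \<Rightarrow> 'a::field) set \<Rightarrow> bool" where
  "generalized_gabidulin q m k n C \<longleftrightarrow>
     (\<exists>s g. coprime s m \<and> lin_indep_Fq q n g \<and> C = row_space k n (gab_matrix q s g))"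

definition sys_matrix :: "nat \<Rightarrow> (nat \<Rightarrow> nat \<Rightarrow> 'a::field) \<Rightarrow> nat \<Rightarrow> nat \<Rightarrow> 'a" where
  "sys_matrix k X i j = (if j < k then (if i = j then 1 else 0) else X i (j - k))"

definition matrices :: "nat \<Rightarrow> nat \<Rightarrow> (nat \<Rightarrow> nat \<Rightarrow> 'a::zero) set" where
  "matrices r c = {X. \<forall>i j. (r \<le> i \<or> c \<le> j) \<longrightarrow> X i j = 0}"

end

theory Submission
  imports Defs "HOL-Library.FuncSet"
begin

lemma ff_pow_card:
  fixes x :: "'a :: {field,finite}"
  shows "x ^ card (UNIV :: 'a set) = x"
proof (cases "x = 0")
  case False
  have "x * (\<Prod>y\<in>UNIV-{0}. x * y) = x * x ^ (card (UNIV :: 'a set) - 1) * \<Prod>(UNIV-{0})"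
    by (simp add: prod.distrib mult_ac)
  also have "x * x ^ (card (UNIV :: 'a set) - 1) = x ^ Suc (card (UNIV :: 'a set) - 1)"
    by (subst power_Suc) auto
  also have "Suc (card (UNIV :: 'a set) - 1) = card (UNIV :: 'a set)"
    using finite_UNIV_card_ge_0[where ?'a = 'a] by simp
  also have "(\<Prod>y\<in>UNIV-{0}. x * y) = (\<Prod>y\<in>UNIV-{0}. y)"
    by (rule prod.reindex_bij_witness[of _ "\<lambda>y. y / x" "\<lambda>y. x * y"]) (use False in auto)
  finally show ?thesis
    by simp
qed (use finite_UNIV_card_ge_0[where ?'a = 'a] in auto)

lemma ff_pow_card_pow:
  fixes x :: "'a :: {field,finite}"
  shows "x ^ (card (UNIV :: 'a set) ^ t) = x"
  by (induction t) (simp_all add: ff_pow_card power_mult)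

lemma if10_mult: "(if b then 1 else 0) * (x::'a::field) = (if b then x else 0)" by simp

lemma row_space_sub:
  assumes "\<And>i j. i < k \<Longrightarrow> j < n \<Longrightarrow> M i j = d i * M' i j"
  shows "row_space k n M \<subseteq> row_space k n M'"
proof
  fix v assume "v \<in> row_space k n M"
  then obtain a where v: "v = (\<lambda>j. if j < n then (\<Sum>i<k. a i * M i j) else 0)"
    unfolding row_space_def by blast
  have "v = (\<lambda>j. if j < n then (\<Sum>i<k. (a i * d i) * M' i j) else 0)"
    unfolding v using assms by (auto intro!: sum.cong simp: mult.assoc)
  then show "v \<in> row_space k n M'" unfolding row_space_def
    by (intro CollectI exI[of _ "\<lambda>i. a i * d i"]) simp
qed

lemma sys_inj:
  fixes X Y :: "nat \<Rightarrow> nat \<Rightarrow> 'a::field"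
  assumes X: "X \<in> matrices k (n - k)" and Y: "Y \<in> matrices k (n - k)"
    and eq: "row_space k n (sys_matrix k X) = row_space k n (sys_matrix k Y)"
    and kn: "k < n"
  shows "X = Y"
proof (intro ext)
  fix i j
  show "X i j = Y i j"
  proof (cases "i < k \<and> j < n - k")
    case False
    then show ?thesis using X Y unfolding matrices_def by auto
  next
    case True
    define v where "v = (\<lambda>j'. if j' < n then (\<Sum>i'<k. (if i' = i then 1 else 0) * sys_matrix k X i' j') else (0::'a))"
    have "v \<in> row_space k n (sys_matrix k X)" unfolding row_space_def v_def
      by (intro CollectI exI[of _ "\<lambda>i'. if i' = i then 1 else 0"]) simp
    then have "v \<in> row_space k n (sys_matrix k Y)" using eq by simp
    then obtain a where va: "v = (\<lambda>j. if j < n then (\<Sum>i<k. a i * sys_matrix k Y i j) else 0)"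
      unfolding row_space_def by blast
    have vv: "v j' = (if j' < n then sys_matrix k X i j' else 0)" for j'
      unfolding v_def using True by (simp add: if10_mult)
    have ai: "a i' = (if i' = i then 1 else 0)" if "i' < k" for i'
    proof -
      have "v i' = (\<Sum>i''<k. a i'' * sys_matrix k Y i'' i')" using va that kn by simp
      also have "\<dots> = (\<Sum>i''<k. if i'' = i' then a i'' else 0)"
        by (rule sum.cong) (auto simp: sys_matrix_def that)
      also have "\<dots> = a i'" using that by simp
      finally have "a i' = v i'" by simp
      also have "\<dots> = (if i' = i then 1 else 0)" using vv[of i'] that kn
        by (simp add: sys_matrix_def)
      finally show ?thesis .
    qed
    have kj: "k + j < n" using True by linarith
    have "v (k + j) = (\<Sum>i'<k. a i' * sys_matrix k Y i' (k + j))" using va kj by simp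
    also have "\<dots> = (\<Sum>i'<k. (if i' = i then 1 else 0) * Y i' j)"
      by (rule sum.cong) (auto simp: ai sys_matrix_def)
    also have "\<dots> = Y i j" using True by (simp add: if10_mult)
    finally show ?thesis using vv[of "k+j"] kj by (simp add: sys_matrix_def)
  qed
qed

lemma card_matrices:
  "card (matrices k c :: (nat \<Rightarrow> nat \<Rightarrow> 'a::{zero,finite}) set) = card (UNIV::'a set) ^ (k * c)"
proof -
  define D where "D = {..<k} \<times> {..<c}"
  define h where "h = (\<lambda>(f::nat\<times>nat \<Rightarrow> 'a) i j. if i < k \<and> j < c then f (i,j) else 0)"
  have inj: "inj_on h (D \<rightarrow>\<^sub>E (UNIV::'a set))"
  proof (rule inj_onI)
    fix f f' assume f: "f \<in> D \<rightarrow>\<^sub>E UNIV" and f': "f' \<in> D \<rightarrow>\<^sub>E UNIV" and e: "h f = h f'"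
    show "f = f'"
    proof (rule PiE_ext[OF f f'])
      fix x assume "x \<in> D"
      then obtain i j where x: "x = (i,j)" "i < k" "j < c" unfolding D_def by auto
      have "h f i j = h f' i j" using e by simp
      then show "f x = f' x" using x unfolding h_def by simp
    qed
  qed
  have im: "h ` (D \<rightarrow>\<^sub>E UNIV) = matrices k c"
  proof
    show "h ` (D \<rightarrow>\<^sub>E UNIV) \<subseteq> matrices k c" unfolding h_def matrices_def by auto
    show "matrices k c \<subseteq> h ` (D \<rightarrow>\<^sub>E UNIV)"
    proof
      fix X :: "nat \<Rightarrow> nat \<Rightarrow> 'a" assume X: "X \<in> matrices k c"
      define f where "f = restrict (\<lambda>(i,j). X i j) D"
      have "f \<in> D \<rightarrow>\<^sub>E UNIV" unfolding f_def by simp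
      moreover have "h f = X"
        using X unfolding h_def f_def D_def matrices_def by (auto intro!: ext)
      ultimately show "X \<in> h ` (D \<rightarrow>\<^sub>E UNIV)" by blast
    qed
  qed
  have "card (matrices k c :: (nat \<Rightarrow> nat \<Rightarrow> 'a) set) = card (D \<rightarrow>\<^sub>E (UNIV::'a set))"
    using card_image[OF inj] im by simp
  also have "\<dots> = card (UNIV::'a set) ^ (k * c)" by (simp add: card_funcsetE D_def)
  finally show ?thesis .
qed

lemma S_card:
  assumes "m \<ge> (2::nat)"
  shows "card {s. s < m \<and> coprime s m} = totient m"
proof -
  have "{s. s < m \<and> coprime s m} = totatives m"
  proof safe
    fix s assume "s < m" "coprime s m"
    then show "s \<in> totatives m" using assms
      by (auto simp: totatives_def intro!: Nat.gr0I)
  next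
    fix s assume s: "s \<in> totatives m"
    then show "coprime s m" by (simp add: totatives_def)
    have "s \<le> m" "s \<noteq> m" using s assms by (auto simp: totatives_def)
    then show "s < m" by simp
  qed
  then show ?thesis by (simp add: totient_def)
qed

lemma gab_mod:
  fixes g :: "nat \<Rightarrow> 'a::{field,finite}"
  assumes "card (UNIV::'a set) = q ^ m"
  shows "gab_matrix q s g = gab_matrix q (s mod m) g"
proof (intro ext)
  fix i j
  have "s * i = (s mod m) * i + m * ((s div m) * i)"
    by (metis add_mult_distrib mod_div_mult_eq mult.assoc mult.commute)
  then have "q ^ (s * i) = q ^ ((s mod m) * i) * (q ^ m) ^ ((s div m) * i)"
    by (simp add: power_add power_mult)
  then have "g j ^ (q ^ (s * i)) = (g j ^ (q ^ ((s mod m) * i))) ^ (card (UNIV::'a set) ^ ((s div m) * i))"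
    by (simp add: power_mult assms)
  also have "\<dots> = g j ^ (q ^ ((s mod m) * i))" by (rule ff_pow_card_pow)
  finally show "gab_matrix q s g i j = gab_matrix q (s mod m) g i j"
    by (simp add: gab_matrix_def)
qed

lemma g0_nz:
  fixes g :: "nat \<Rightarrow> 'a::field"
  assumes "lin_indep_Fq q n g" "0 < n" "0 < q"
  shows "g 0 \<noteq> 0"
proof
  assume g0: "g 0 = 0"
  define c where "c = (\<lambda>j::nat. if j = 0 then 1 else (0::'a))"
  have "\<forall>j<n. c j ^ q = c j" using assms(3) by (simp add: c_def)
  moreover have "(\<Sum>j<n. c j * g j) = 0"
    using g0 by (simp add: c_def if10_mult)
  ultimately have "c 0 = 0" using assms(1,2) unfolding lin_indep_Fq_def by blast
  then show False by (simp add: c_def)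
qed

lemma normalize:
  fixes g :: "nat \<Rightarrow> 'a::field"
  assumes g0: "g 0 \<noteq> 0" and n: "0 < n"
  defines "g' \<equiv> (\<lambda>j. if j = 0 then 1 else if j < n then g j / g 0 else 0)"
  shows "row_space k n (gab_matrix q s g) = row_space k n (gab_matrix q s g')"
proof -
  have g': "g' j = g j / g 0" if "j < n" for j using that g0 by (simp add: g'_def)
  have e1: "gab_matrix q s g i j = (g 0 ^ (q ^ (s * i))) * gab_matrix q s g' i j" if "j < n" for i j
    unfolding gab_matrix_def g'[OF that] power_divide using g0 by simp
  have e2: "gab_matrix q s g' i j = inverse (g 0 ^ (q ^ (s * i))) * gab_matrix q s g i j" if "j < n" for i j
    unfolding gab_matrix_def g'[OF that] power_divide using g0 by (simp add: field_simps)
  show ?thesis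
    using row_space_sub[of k n "gab_matrix q s g" "\<lambda>i. g 0 ^ (q ^ (s * i))" "gab_matrix q s g'"]
      row_space_sub[of k n "gab_matrix q s g'" "\<lambda>i. inverse (g 0 ^ (q ^ (s * i)))" "gab_matrix q s g"]
      e1 e2 by blast
qed

lemma arith_final:
  fixes q m k c T :: nat
  assumes q: "q \<ge> 2" and m: "m \<ge> 2" and k: "k \<ge> 1" and c: "c \<ge> 1"
  shows "real T * real (q ^ m) ^ (k + c - 1) / real (q ^ m) ^ (k * c)
     \<le> real T * (2 * real q powr (1 - real m)) ^ ((k div 2) * (c div 2))"
proof -
  define A where "A = (k - 1) * (c - 1)"
  define e where "e = (k div 2) * (c div 2)"
  have kc: "k * c = (k + c - 1) + A" unfolding A_def
  proof -
    obtain k' c' where "k = Suc k'" "c = Suc c'" using k c by (metis Suc_le_D One_nat_def)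
    then show "k * c = k + c - 1 + (k - 1) * (c - 1)" by simp
  qed
  have eA: "e \<le> A" unfolding e_def A_def by (rule mult_le_mono) (use k c in auto)
  have qpos: "(0::real) < real q" using q by simp
  have "real (q ^ m) ^ (k * c) = real (q ^ m) ^ (k + c - 1) * real (q ^ m) ^ A"
    by (simp add: kc power_add)
  then have L: "real T * real (q ^ m) ^ (k + c - 1) / real (q ^ m) ^ (k * c) = real T / real (q ^ m) ^ A"
    using q by simp
  have pw: "real q powr (real (m * A)) = real q ^ (m * A)" using qpos by (rule powr_realpow)
  have "1 / real (q ^ m) ^ A = real q powr (- real (m * A))"
    unfolding powr_minus pw by (simp add: power_mult divide_inverse)
  also have "\<dots> \<le> real q powr (real e * (1 - real m))"
  proof (rule powr_mono)
    have "real e * (real m - 1) \<le> real A * (real m - 1)"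
      using eA m by (intro mult_right_mono) auto
    also have "\<dots> \<le> real A * real m" by (intro mult_left_mono) auto
    finally show "- real (m * A) \<le> real e * (1 - real m)" by (simp add: algebra_simps)
  qed (use q in auto)
  also have "\<dots> = (real q powr (1 - real m)) ^ e" using qpos by (simp add: powr_power)
  also have "\<dots> \<le> (2 * real q powr (1 - real m)) ^ e" by (intro power_mono) auto
  finally have "1 / real (q ^ m) ^ A \<le> (2 * real q powr (1 - real m)) ^ e" .
  then have "real T * (1 / real (q ^ m) ^ A) \<le> real T * (2 * real q powr (1 - real m)) ^ e"
    by (intro mult_left_mono) auto
  then show ?thesis unfolding L e_def by simp
qed

theorem theorem4p9:
  fixes q m k n :: nat
    and Mats :: "(nat \<Rightarrow> nat \<Rightarrow> 'a::{field,finite}) set"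
  assumes "prime_power q" and "m \<ge> 2" and "1 \<le> k" and "k < n"
    and "card (UNIV :: 'a set) = q ^ m"
    and "Mats = matrices k (n - k)"
  shows "real (card {X \<in> Mats. generalized_gabidulin q m k n (row_space k n (sys_matrix k X))})
           / real (card Mats)
         \<le> real (totient m) * (2 * real q powr (1 - real m)) ^ ((k div 2) * ((n - k) div 2))"
proof -
  note card = assms(5)
  have q2: "q \<ge> 2"
  proof -
    obtain p r where "prime p" "r > 0" "q = p ^ r" using assms(1) unfolding prime_power_def by blast
    then have "2 \<le> p" using prime_ge_2_nat by blast
    moreover have "p \<le> q" using \<open>r > 0\<close> \<open>q = p ^ r\<close> \<open>2 \<le> p\<close>
      by (metis One_nat_def Suc_leI le_trans one_le_numeral power_increasing power_one_right)
    ultimately show ?thesis by simp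
  qed
  define N where "N = q ^ m"
  define S where "S = {s. s < m \<and> coprime s m}"
  define G where "G = (\<lambda>f j. if j = 0 then 1 else if j < n then f j else (0::'a)) ` ({1..<n} \<rightarrow>\<^sub>E (UNIV::'a set))"
  define F where "F = (\<lambda>(s, g::nat \<Rightarrow> 'a). row_space k n (gab_matrix q s g))"
  define R where "R = (\<lambda>X::nat \<Rightarrow> nat \<Rightarrow> 'a. row_space k n (sys_matrix k X))"
  define Good where "Good = {X \<in> Mats. generalized_gabidulin q m k n (R X)}"
  have finS: "finite S" unfolding S_def by simp
  have finG: "finite G" unfolding G_def by (intro finite_imageI finite_PiE) auto
  have cardG: "card G \<le> N ^ (n - 1)"
  proof -
    have "card G \<le> card ({1..<n} \<rightarrow>\<^sub>E (UNIV::'a set))" unfolding G_def by (rule card_image_le) (intro finite_PiE, auto)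
    also have "\<dots> = N ^ (n - 1)" by (simp add: card_funcsetE card N_def)
    finally show ?thesis .
  qed
  have cardS: "card S = totient m" unfolding S_def using assms(2) by (rule S_card)
  have sub: "R ` Good \<subseteq> F ` (S \<times> G)"
  proof
    fix C assume "C \<in> R ` Good"
    then have "generalized_gabidulin q m k n C" unfolding Good_def by auto
    then obtain s g where sg: "coprime s m" "lin_indep_Fq q n g" "C = row_space k n (gab_matrix q s g)"
      unfolding generalized_gabidulin_def by blast
    have g0: "g 0 \<noteq> 0" using g0_nz[OF sg(2)] assms(4) q2 by simp
    define g' where "g' = (\<lambda>j. if j = 0 then 1 else if j < n then g j / g 0 else 0)"
    have "C = row_space k n (gab_matrix q (s mod m) g)" using sg(3) gab_mod[OF card] by metis
    also have "\<dots> = row_space k n (gab_matrix q (s mod m) g')"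
      unfolding g'_def by (rule normalize[where g=g, OF g0]) (use assms(4) in simp)
    finally have C: "C = F (s mod m, g')" unfolding F_def by simp
    have "s mod m \<in> S" unfolding S_def using sg(1) assms(2) by simp
    moreover have "g' \<in> G"
    proof -
      define f where "f = restrict (\<lambda>j. g j / g 0) {1..<n}"
      have "f \<in> {1..<n} \<rightarrow>\<^sub>E (UNIV::'a set)" unfolding f_def by simp
      moreover have "g' = (\<lambda>j. if j = 0 then 1 else if j < n then f j else 0)"
        unfolding g'_def f_def by (auto intro!: ext)
      ultimately show ?thesis unfolding G_def by blast
    qed
    ultimately show "C \<in> F ` (S \<times> G)" using C by blast
  qed
  have injR: "inj_on R Good"
    by (rule inj_onI) (use sys_inj assms(4,6) in \<open>auto simp: Good_def R_def\<close>)
  have "card Good = card (R ` Good)" using card_image[OF injR] by simp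
  also have "\<dots> \<le> card (F ` (S \<times> G))" by (rule card_mono) (use sub finS finG in auto)
  also have "\<dots> \<le> card (S \<times> G)" by (rule card_image_le) (use finS finG in auto)
  also have "\<dots> = card S * card G" by (simp add: card_cartesian_product)
  also have "\<dots> \<le> totient m * N ^ (n - 1)" using cardG cardS by simp
  finally have cg: "card Good \<le> totient m * N ^ (n - 1)" .
  have cM: "card Mats = N ^ (k * (n - k))" using assms(6) card_matrices card N_def by metis
  have Npos: "0 < N" using q2 N_def by simp
  have "real (card Good) / real (card Mats) \<le> real (totient m * N ^ (n - 1)) / real (card Mats)"
    by (rule divide_right_mono) (use cg in \<open>simp only: of_nat_le_iff\<close>, simp)
  also have "\<dots> = real (totient m) * real N ^ (k + (n - k) - 1) / real N ^ (k * (n - k))"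
    using cM assms(4) by simp
  also have "\<dots> \<le> real (totient m) * (2 * real q powr (1 - real m)) ^ ((k div 2) * ((n - k) div 2))"
    unfolding N_def by (rule arith_final) (use q2 assms(2,3,4) in auto)
  finally show ?thesis unfolding Good_def R_def .
qed

end
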